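(* Let $n\geqslant2$ be even. Then either $R[n/2]$ has maximal size among all rainbows on $\{0,\dots,n\}$, or both $R[0]$ and $R[n]$ have maximal size among all rainbows on $\{0,\dots,n\}$.
   Context: An arc is a pair $\underline{x}\to\underline{y}$ of integers $0\leqslant x<y\leqslant n$, with weight $\binom{n}{x,\,y-x,\,n-y}=\frac{n!}{x!(y-x)!(n-y)!}$. A rainbow on $\{0,\dots,n\}$ is a set of arcs $\{\underline{x_i}\to\underline{y_i}\}_{0\leqslant i\leqslant m}$ with $x_0<x_1<\dots<x_m<y_m<\dots<y_0$; its size is the sum of the weights of its arcs. For $n$ even and $0\leqslant x\leqslant n$, $R[x]$ denotes the unique rainbow with $\frac n2$ arcs whose set of endpoints is $\{0,\dots,n\}\setminus\{x\}$. *)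

theory Defs
  imports Main
begin

definition arc_weight :: "nat \<Rightarrow> nat \<times> nat \<Rightarrow> nat" where
  "arc_weight n a = fact n div (fact (fst a) * fact (snd a - fst a) * fact (n - snd a))"

definition is_rainbow :: "nat \<Rightarrow> (nat \<times> nat) set \<Rightarrow> bool" where
  "is_rainbow n A \<longleftrightarrow> finite A \<and> A \<noteq> {} \<and>
     (\<forall>(x,y)\<in>A. x < y \<and> y \<le> n) \<and>
     (\<forall>(a,b)\<in>A. \<forall>(c,d)\<in>A. (a,b) \<noteq> (c,d) \<longrightarrow>
        (a < c \<and> d < b) \<or> (c < a \<and> b < d))"

definition rainbow_size :: "nat \<Rightarrow> (nat \<times> nat) set \<Rightarrow> nat" where
  "rainbow_size n A = (\<Sum>a\<in>A. arc_weight n a)"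

text \<open>R[x] (n even): the rainbow with n/2 arcs whose endpoint set is {0..n} - {x}.
 With e the increasing enumeration of {0..n} - {x} (length n), the arcs are
 e!i -> e!(n-1-i) for i < n/2.\<close>

definition R :: "nat \<Rightarrow> nat \<Rightarrow> (nat \<times> nat) set" where
  "R n x = (let e = filter (\<lambda>k. k \<noteq> x) [0..<Suc n] in
            {(e ! i, e ! (n - 1 - i)) | i. i < n div 2})"

definition max_size_rainbow :: "nat \<Rightarrow> (nat \<times> nat) set \<Rightarrow> bool" where
  "max_size_rainbow n A \<longleftrightarrow> is_rainbow n A \<and>
     (\<forall>B. is_rainbow n B \<longrightarrow> rainbow_size n B \<le> rainbow_size n A)"

end

theory Submission
  imports Defs "HOL.Binomial_Plus"
begin

definition hh :: "nat \<Rightarrow> nat \<Rightarrow> nat" where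
  "hh n s = (n choose s) * (s choose (s div 2))"

lemma aw_eq:
  assumes "x < y" "y \<le> n"
  shows "arc_weight n (x,y) = (n choose (x + (n-y))) * ((x + (n-y)) choose x)"
proof -
  define s where "s = x + (n - y)"
  have sn: "s \<le> n" using assms unfolding s_def by simp
  have 1: "fact s * fact (n-s) * (n choose s) = (fact n :: nat)"
    using binomial_fact_lemma[OF sn] .
  have 2: "fact x * fact (s-x) * (s choose x) = (fact s :: nat)"
    using binomial_fact_lemma[of x s] unfolding s_def by simp
  have e1: "n - s = y - x" "s - x = n - y" using assms unfolding s_def by auto
  have "(fact n :: nat) = ((n choose s) * (s choose x)) * (fact x * fact (y-x) * fact (n-y))"
    using 1 2 e1 by (metis mult.commute mult.left_commute)
  hence "arc_weight n (x,y) = ((n choose s) * (s choose x) * (fact x * fact (y-x) * fact (n-y)))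
      div (fact x * fact (y-x) * fact (n-y))"
    unfolding arc_weight_def by simp
  also have "\<dots> = (n choose s) * (s choose x)"
    by (simp add: fact_nonzero)
  finally show ?thesis unfolding s_def .
qed

lemma aw_le:
  assumes "x < y" "y \<le> n"
  shows "arc_weight n (x,y) \<le> hh n (x + (n-y))"
  unfolding aw_eq[OF assms] hh_def
  by (intro mult_le_mono2 binomial_maximum)

lemma binom_step: "(n choose Suc s) * Suc s = (n choose s) * (n - s)"
proof (cases n)
  case 0 then show ?thesis by simp
next
  case (Suc m)
  have "(n choose Suc s) * Suc s = Suc m * (m choose s)"
    using Suc_times_binomial[of s m] Suc by (simp add: mult.commute)
  also have "\<dots> = (n choose s) * (n - s)"
    using binomial_absorb_comp[of n s] Suc by (simp add: mult.commute)
  finally show ?thesis .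
qed

lemma binom_mid: "(Suc s choose (Suc s div 2)) = (Suc s choose Suc (s div 2))"
proof (cases "even s")
  case True
  then have "Suc s div 2 = s div 2" by presburger
  moreover have "Suc s - s div 2 = Suc (s div 2)" using True by presburger
  ultimately show ?thesis using binomial_symmetric[of "s div 2" "Suc s"] by simp
next
  case False
  then have "Suc s div 2 = Suc (s div 2)" by presburger
  then show ?thesis by simp
qed

lemma hh_rec:
  "hh n (Suc s) * (s div 2 + 1) = hh n s * (n - s)"
proof -
  have "hh n (Suc s) * (s div 2 + 1) = (n choose Suc s) * ((Suc s choose Suc (s div 2)) * Suc (s div 2))"
    unfolding hh_def binom_mid by (simp only: mult.assoc Suc_eq_plus1)
  also have "\<dots> = (n choose Suc s) * (Suc s * (s choose (s div 2)))"
    using Suc_times_binomial_eq[of s "s div 2"] by simp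
  also have "\<dots> = ((n choose Suc s) * Suc s) * (s choose (s div 2))" by (simp only: mult.assoc mult.commute mult.left_commute)
  also have "\<dots> = hh n s * (n - s)" unfolding binom_step hh_def by simp
  finally show ?thesis .
qed

lemma hh_unimodal:
  obtains M where "M \<le> n" "\<forall>s<M. hh n s \<le> hh n (Suc s)" "\<forall>s\<ge>M. hh n (Suc s) \<le> hh n s"
proof -
  define P where "P s \<longleftrightarrow> s div 2 + 1 + s \<le> n" for s
  define M where "M = (LEAST s. \<not> P s)"
  have nP: "\<not> P n" unfolding P_def by simp
  have nPM: "\<not> P M" unfolding M_def using nP by (rule LeastI)
  have Mn: "M \<le> n" unfolding M_def using nP by (rule Least_le)
  have inc: "hh n s \<le> hh n (Suc s)" if "s < M" for s
  proof -
    have Ps: "P s" using not_less_Least[of s "\<lambda>s. \<not> P s"] that unfolding M_def by blast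
    hence le: "s div 2 + 1 \<le> n - s" unfolding P_def by simp
    have "hh n s * (s div 2 + 1) \<le> hh n s * (n - s)" using le by (rule mult_le_mono2)
    also have "\<dots> = hh n (Suc s) * (s div 2 + 1)" using hh_rec by simp
    finally have "hh n s * (s div 2 + 1) \<le> hh n (Suc s) * (s div 2 + 1)" .
    thus ?thesis by (simp only: mult_le_cancel2)
  qed
  have dec: "hh n (Suc s) \<le> hh n s" if "s \<ge> M" for s
  proof -
    have "\<not> P s"
    proof
      assume "P s"
      hence "P M" using that unfolding P_def by (meson add_le_mono div_le_mono le_trans order_refl)
      thus False using nPM by simp
    qed
    hence lt: "n - s < s div 2 + 1" unfolding P_def by simp
    have "hh n (Suc s) * (s div 2 + 1) = hh n s * (n - s)" using hh_rec by simp
    also have "\<dots> \<le> hh n s * (s div 2 + 1)" using lt by (intro mult_le_mono2) simp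
    finally have "hh n (Suc s) * (s div 2 + 1) \<le> hh n s * (s div 2 + 1)" .
    thus ?thesis by (simp only: mult_le_cancel2)
  qed
  show ?thesis using that Mn inc dec by blast
qed

lemma indep_bound:
  fixes h :: "nat \<Rightarrow> nat"
  assumes S: "S \<subseteq> {..<n}" and ind: "\<forall>s\<in>S. Suc s \<notin> S" and Mn: "M \<le> n"
    and inc: "\<forall>s<M. h s \<le> h (Suc s)" and dec: "\<forall>s\<ge>M. h (Suc s) \<le> h s"
  shows "sum h S \<le> max (sum h {t. t<n \<and> even t}) (sum h {t. t<n \<and> odd t})"
proof -
  define b where "b = (if M \<in> S then even M else odd M)"
  define T where "T = {t. t < n \<and> even t = b}"
  define psi where "psi s = (if even s = b then s else if s < M then Suc s else s - 1)" for s
  have finS: "finite S" using S finite_subset by blast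
  have keyM: "s \<noteq> M" if "s \<in> S" "even s \<noteq> b" for s
    using that unfolding b_def by auto
  have keyM1: "Suc s \<noteq> M" if "s \<in> S" "even s \<noteq> b" for s
    using that ind unfolding b_def by auto
  have inj: "inj_on psi S"
  proof (rule inj_onI)
    fix s s' assume s: "s \<in> S" and s': "s' \<in> S" and eq: "psi s = psi s'"
    show "s = s'"
    proof (rule ccontr)
      assume ne: "s \<noteq> s'"
      have a: "Suc s \<noteq> s'" "Suc s' \<noteq> s" using ind s s' by auto
      show False
        using eq ne a keyM[OF s] keyM[OF s'] keyM1[OF s] keyM1[OF s'] unfolding psi_def
        by (auto split: if_splits)
    qed
  qed
  have img: "psi ` S \<subseteq> T"
  proof
    fix t assume "t \<in> psi ` S"
    then obtain s where s: "s \<in> S" and t: "t = psi s" by blast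
    have sn: "s < n" using s S by auto
    show "t \<in> T"
    proof (cases "even s = b")
      case True then show ?thesis using t sn unfolding T_def psi_def by simp
    next
      case False
      note F = False
      show ?thesis
      proof (cases "s < M")
        case True
        have "Suc s \<noteq> n"
        proof
          assume "Suc s = n"
          hence "M = n" using True Mn by simp
          hence "M \<notin> S" using S by auto
          hence "b = odd n" using \<open>M = n\<close> unfolding b_def by simp
          thus False using F \<open>Suc s = n\<close> by auto
        qed
        then show ?thesis using t sn True F unfolding T_def psi_def by auto
      next
        case False
        have "s \<noteq> M" using keyM[OF s F] .
        hence "s > 0" using False by simp
        then show ?thesis using t sn False F unfolding T_def psi_def by auto
      qed
    qed
  qed
  have hle: "h s \<le> h (psi s)" if s: "s \<in> S" for s
  proof (cases "even s = b")
    case True then show ?thesis unfolding psi_def by simp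
  next
    case False
    show ?thesis
    proof (cases "s < M")
      case True then show ?thesis using False inc unfolding psi_def by simp
    next
      case F2: False
      have "s \<noteq> M" using keyM[OF s False] .
      hence "s - 1 \<ge> M" "Suc (s - 1) = s" using F2 by auto
      hence "h s \<le> h (s - 1)" using dec by metis
      then show ?thesis using False F2 unfolding psi_def by simp
    qed
  qed
  have "sum h S \<le> sum (h \<circ> psi) S" using hle by (intro sum_mono) simp
  also have "\<dots> = sum h (psi ` S)" by (simp add: sum.reindex[OF inj])
  also have "\<dots> \<le> sum h T" using img by (intro sum_mono2) (auto simp: T_def)
  also have "\<dots> \<le> max (sum h {t. t<n \<and> even t}) (sum h {t. t<n \<and> odd t})"
    unfolding T_def by (cases b) auto
  finally show ?thesis .
qed

lemma rainbow_bound: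
  assumes "is_rainbow n A"
  shows "rainbow_size n A \<le> max (sum (hh n) {t. t<n \<and> even t}) (sum (hh n) {t. t<n \<and> odd t})"
proof -
  define sg where "sg = (\<lambda>(x::nat,y::nat). x + (n - y))"
  have fin: "finite A" using assms unfolding is_rainbow_def by blast
  have valid: "\<forall>(x,y)\<in>A. x < y \<and> y \<le> n" using assms unfolding is_rainbow_def by blast
  have nest: "\<forall>(a,b)\<in>A. \<forall>(c,d)\<in>A. (a,b) \<noteq> (c,d) \<longrightarrow> (a < c \<and> d < b) \<or> (c < a \<and> b < d)"
    using assms unfolding is_rainbow_def by blast
  have sep: "sg p + 2 \<le> sg q \<or> sg q + 2 \<le> sg p" if "p \<in> A" "q \<in> A" "p \<noteq> q" for p q
  proof -
    obtain a b where p: "p = (a,b)" by (cases p)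
    obtain c d where q: "q = (c,d)" by (cases q)
    have "b \<le> n" "d \<le> n" using valid that p q by auto
    moreover have "(a < c \<and> d < b) \<or> (c < a \<and> b < d)"
      using nest that unfolding p q by blast
    ultimately show ?thesis unfolding p q sg_def by (elim conjE disjE) (simp_all, arith+)
  qed
  have inj: "inj_on sg A"
  proof (rule inj_onI)
    fix p q assume pq: "p \<in> A" "q \<in> A" "sg p = sg q"
    show "p = q"
    proof (rule ccontr)
      assume "p \<noteq> q"
      from sep[OF pq(1,2) this] pq(3) show False by simp
    qed
  qed
  have S: "sg ` A \<subseteq> {..<n}" using valid unfolding sg_def by auto
  have ind: "\<forall>s\<in>sg ` A. Suc s \<notin> sg ` A"
  proof (intro ballI notI)
    fix s assume s1: "s \<in> sg ` A" and s2: "Suc s \<in> sg ` A"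
    obtain p where "p \<in> A" "s = sg p" using s1 by (rule imageE)
    moreover obtain q where "q \<in> A" "Suc s = sg q" using s2 by (rule imageE)
    ultimately have "p \<in> A" "q \<in> A" "sg p = s" "sg q = Suc s" by simp_all
    thus False using sep[of p q] by (cases "p = q") simp_all
  qed
  obtain M where M: "M \<le> n" "\<forall>s<M. hh n s \<le> hh n (Suc s)" "\<forall>s\<ge>M. hh n (Suc s) \<le> hh n s"
    by (rule hh_unimodal)
  have "rainbow_size n A \<le> sum (hh n \<circ> sg) A"
    unfolding rainbow_size_def
  proof (rule sum_mono)
    fix p assume "p \<in> A"
    then obtain x y where "p = (x,y)" "x < y" "y \<le> n" using valid by (cases p) auto
    thus "arc_weight n p \<le> (hh n \<circ> sg) p" using aw_le unfolding sg_def by simp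
  qed
  also have "\<dots> = sum (hh n) (sg ` A)" by (simp add: sum.reindex[OF inj])
  also have "\<dots> \<le> max (sum (hh n) {t. t<n \<and> even t}) (sum (hh n) {t. t<n \<and> odd t})"
    using indep_bound[OF S ind M] .
  finally show ?thesis .
qed

lemma filt_eq:
  assumes "x \<le> n"
  shows "filter (\<lambda>k. k \<noteq> x) [0..<Suc n] = [0..<x] @ [Suc x..<Suc n]"
proof -
  define L where "L = [Suc x..<Suc n]"
  have e1: "[0..<Suc n] = [0..<x] @ [x..<Suc n]" using upt_add_eq_append[of 0 x "Suc n - x"] assms by simp
  have e2: "[x..<Suc n] = x # L" using assms unfolding L_def by (simp add: upt_conv_Cons)
  have f1: "filter (\<lambda>k. k \<noteq> x) [0..<x] = [0..<x]" by (simp add: filter_id_conv)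
  have "\<forall>k\<in>set L. k \<noteq> x"
    unfolding L_def set_upt atLeastLessThan_iff by (intro ballI) simp
  hence f2: "filter (\<lambda>k. k \<noteq> x) L = L" by (rule filter_True)
  have "filter (\<lambda>k. k \<noteq> x) [0..<Suc n] = filter (\<lambda>k. k \<noteq> x) [0..<x] @ filter (\<lambda>k. k \<noteq> x) (x # L)"
    unfolding e1 e2 by (rule filter_append)
  also have "\<dots> = [0..<x] @ L" unfolding f1 by (simp only: filter.simps f2 if_False simp_thms)
  finally show ?thesis unfolding L_def .
qed

lemma nth_filt:
  assumes "x \<le> n" "i < n"
  shows "filter (\<lambda>k. k \<noteq> x) [0..<Suc n] ! i = (if i < x then i else Suc i)"
  unfolding filt_eq[OF assms(1)] using assms by (simp add: nth_append) arith

lemma R_eq: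
  assumes "x \<le> n" "1 \<le> n"
  shows "R n x = (\<lambda>i. (if i < x then i else Suc i, if n - 1 - i < x then n - 1 - i else Suc (n - 1 - i))) ` {..<n div 2}"
proof -
  define e where "e = filter (\<lambda>k. k \<noteq> x) [0..<Suc n]"
  have "R n x = {(e ! i, e ! (n - 1 - i)) | i. i < n div 2}" unfolding R_def e_def Let_def ..
  also have "\<dots> = (\<lambda>i. (e ! i, e ! (n - 1 - i))) ` {..<n div 2}" by blast
  also have "\<dots> = (\<lambda>i. (if i < x then i else Suc i, if n - 1 - i < x then n - 1 - i else Suc (n - 1 - i))) ` {..<n div 2}"
  proof (rule image_cong[OF refl])
    fix i assume "i \<in> {..<n div 2}"
    hence "i < n" "n - 1 - i < n" using assms by auto
    thus "(e ! i, e ! (n - 1 - i)) = (if i < x then i else Suc i, if n - 1 - i < x then n - 1 - i else Suc (n - 1 - i))"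
      unfolding e_def using nth_filt[OF assms(1)] by simp
  qed
  finally show ?thesis .
qed

lemma rb_img:
  fixes m :: nat and u v :: "nat \<Rightarrow> nat"
  assumes "0 < m" "\<forall>i<m. u i < v i \<and> v i \<le> n"
    "\<forall>i j. i < j \<and> j < m \<longrightarrow> u i < u j \<and> v j < v i"
  shows "is_rainbow n ((\<lambda>i. (u i, v i)) ` {..<m})"
  unfolding is_rainbow_def
proof (intro conjI)
  show "finite ((\<lambda>i. (u i, v i)) ` {..<m})" by simp
  show "(\<lambda>i. (u i, v i)) ` {..<m} \<noteq> {}" using assms(1) by auto
  show "\<forall>(x, y)\<in>(\<lambda>i. (u i, v i)) ` {..<m}. x < y \<and> y \<le> n" using assms(2) by auto
  show "\<forall>(a, b)\<in>(\<lambda>i. (u i, v i)) ` {..<m}. \<forall>(c, d)\<in>(\<lambda>i. (u i, v i)) ` {..<m}.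
     (a, b) \<noteq> (c, d) \<longrightarrow> a < c \<and> d < b \<or> c < a \<and> b < d"
    using assms(3) by (clarsimp; metis linorder_neqE_nat)
qed

lemma rs_img:
  fixes m :: nat and u v :: "nat \<Rightarrow> nat"
  assumes "\<forall>i j. i < j \<and> j < m \<longrightarrow> u i < u j"
  shows "rainbow_size n ((\<lambda>i. (u i, v i)) ` {..<m}) = (\<Sum>i<m. arc_weight n (u i, v i))"
proof -
  have "inj_on (\<lambda>i. (u i, v i)) {..<m}"
  proof (rule inj_onI)
    fix i j assume "i \<in> {..<m}" "j \<in> {..<m}" "(u i, v i) = (u j, v j)"
    thus "i = j" using assms by (metis lessThan_iff linorder_neqE_nat less_irrefl prod.inject)
  qed
  thus ?thesis unfolding rainbow_size_def by (simp add: sum.reindex)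
qed

lemma sum_evens:
  fixes n :: nat and f :: "nat \<Rightarrow> nat"
  assumes "even n"
  shows "(\<Sum>i<n div 2. f (2*i)) = sum f {t. t<n \<and> even t}"
proof -
  have "{t. t<n \<and> even t} = (\<lambda>i. 2*i) ` {..<n div 2}"
    using assms by (auto simp: image_def elim!: evenE)
  moreover have "inj_on (\<lambda>i::nat. 2*i) {..<n div 2}" by (simp add: inj_on_def)
  ultimately show ?thesis by (simp add: sum.reindex)
qed

lemma sum_odds:
  fixes n :: nat and f :: "nat \<Rightarrow> nat"
  assumes "even n"
  shows "(\<Sum>i<n div 2. f (2*i+1)) = sum f {t. t<n \<and> odd t}"
proof -
  have "{t. t<n \<and> odd t} = (\<lambda>i. 2*i+1) ` {..<n div 2}"
    using assms by (auto simp: image_def elim!: evenE oddE) presburger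
  moreover have "inj_on (\<lambda>i::nat. 2*i+1) {..<n div 2}" by (simp add: inj_on_def)
  ultimately show ?thesis by (simp add: sum.reindex)
qed

theorem lemma5p13:
  fixes n :: nat
  assumes "even n" and "n \<ge> 2"
  shows "max_size_rainbow n (R n (n div 2)) \<or>
         (max_size_rainbow n (R n 0) \<and> max_size_rainbow n (R n n))"
proof -
  define E where "E = sum (hh n) {t. t<n \<and> even t}"
  define Od where "Od = sum (hh n) {t. t<n \<and> odd t}"
  have n1: "1 \<le> n" using assms by simp
  have m0: "0 < n div 2" using assms by simp
  have R1: "R n (n div 2) = (\<lambda>i. (i, n - i)) ` {..<n div 2}"
    unfolding R_eq[OF div_le_dividend n1] by (intro image_cong refl) auto
  have R0: "R n 0 = (\<lambda>i. (Suc i, n - i)) ` {..<n div 2}"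
    unfolding R_eq[OF zero_le n1] by (intro image_cong refl) auto
  have Rn: "R n n = (\<lambda>i. (i, n - 1 - i)) ` {..<n div 2}"
    unfolding R_eq[OF order_refl n1] by (intro image_cong refl) auto
  have rb1: "is_rainbow n (R n (n div 2))" unfolding R1 by (rule rb_img[OF m0]) auto
  have rb0: "is_rainbow n (R n 0)" unfolding R0 by (rule rb_img[OF m0]) auto
  have rbn: "is_rainbow n (R n n)" unfolding Rn by (rule rb_img[OF m0]) auto
  have s1: "rainbow_size n (R n (n div 2)) = E"
  proof -
    have "rainbow_size n (R n (n div 2)) = (\<Sum>i<n div 2. arc_weight n (i, n - i))"
      unfolding R1 by (rule rs_img) auto
    also have "\<dots> = (\<Sum>i<n div 2. hh n (2*i))"
    proof (rule sum.cong[OF refl])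
      fix i assume "i \<in> {..<n div 2}"
      hence "i < n - i" "n - i \<le> n" "n - (n - i) = i" by auto
      thus "arc_weight n (i, n - i) = hh n (2*i)" unfolding aw_eq[OF \<open>i < n - i\<close> \<open>n - i \<le> n\<close>] hh_def
        by (simp add: mult_2)
    qed
    also have "\<dots> = E" unfolding E_def by (rule sum_evens[OF assms(1)])
    finally show ?thesis .
  qed
  have sn: "rainbow_size n (R n n) = Od"
  proof -
    have "rainbow_size n (R n n) = (\<Sum>i<n div 2. arc_weight n (i, n - 1 - i))"
      unfolding Rn by (rule rs_img) auto
    also have "\<dots> = (\<Sum>i<n div 2. hh n (2*i+1))"
    proof (rule sum.cong[OF refl])
      fix i assume "i \<in> {..<n div 2}"
      hence "i < n - 1 - i" "n - 1 - i \<le> n" "i + (n - (n - 1 - i)) = 2*i+1" by auto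
      thus "arc_weight n (i, n - 1 - i) = hh n (2*i+1)" unfolding aw_eq[OF \<open>i < n - 1 - i\<close> \<open>n - 1 - i \<le> n\<close>] hh_def
        by (simp add: mult_2)
    qed
    also have "\<dots> = Od" unfolding Od_def by (rule sum_odds[OF assms(1)])
    finally show ?thesis .
  qed
  have s0: "rainbow_size n (R n 0) = Od"
  proof -
    have "rainbow_size n (R n 0) = (\<Sum>i<n div 2. arc_weight n (Suc i, n - i))"
      unfolding R0 by (rule rs_img) auto
    also have "\<dots> = (\<Sum>i<n div 2. hh n (2*i+1))"
    proof (rule sum.cong[OF refl])
      fix i assume "i \<in> {..<n div 2}"
      hence "Suc i < n - i" "n - i \<le> n" "Suc i + (n - (n - i)) = 2*i+1" by auto
      moreover have "(2*i+1) choose Suc i = (2*i+1) choose i"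
        using binomial_symmetric[of "Suc i" "2*i+1"] by simp
      ultimately show "arc_weight n (Suc i, n - i) = hh n (2*i+1)" unfolding aw_eq[OF \<open>Suc i < n - i\<close> \<open>n - i \<le> n\<close>] hh_def
        by (simp add: mult_2)
    qed
    also have "\<dots> = Od" unfolding Od_def by (rule sum_odds[OF assms(1)])
    finally show ?thesis .
  qed
  have bound: "rainbow_size n B \<le> max E Od" if "is_rainbow n B" for B
    using rainbow_bound[OF that] unfolding E_def Od_def .
  show ?thesis
  proof (cases "Od \<le> E")
    case True
    hence "max_size_rainbow n (R n (n div 2))"
      unfolding max_size_rainbow_def using rb1 s1 bound by (simp add: max_def)
    thus ?thesis ..
  next
    case False
    hence "max_size_rainbow n (R n 0) \<and> max_size_rainbow n (R n n)"
      unfolding max_size_rainbow_def using rb0 rbn s0 sn bound by (simp add: max_def)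
    thus ?thesis ..
  qed
qed

end
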